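(* Let $b>0$. The total rates of the $\mathrm{Beta}(1,b)$-coalescent satisfy, for $n\in\mathbb{N}$, $$\lambda_n=b\sum_{k=1}^{n-1}\frac{k}{b+k-1}=b(n-1)-b(b-1)\big(\Psi(n+b-1)-\Psi(b)\big).$$ Moreover, as $n\to\infty$, $$\lambda_n=bn-b(b-1)\log n-b+b(b-1)\Psi(b)+O(n^{-1})$$ and $$\frac{1}{\lambda_n}=\frac{1}{bn}\Big(1+(b-1)\frac{\log n}{n}+\frac{1-(b-1)\Psi(b)}{n}+O\Big(\frac{\log^2 n}{n^2}\Big)\Big).$$
   Context: The $\mathrm{Beta}(1,b)$-coalescent has $\Lambda(dx)=b(1-x)^{b-1}dx$ on $[0,1]$; its total rate from state $n$ is $\lambda_n=\int_0^1\big(1-nx(1-x)^{n-1}-(1-x)^n\big)x^{-2}\Lambda(dx)$ (equal to $\sum_{k=2}^n\binom nk\int_0^1x^{k-2}(1-x)^{n-k}\Lambda(dx)$ for $n\ge2$, and $0$ for $n=1$). $\Psi$ is the digamma function. *)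

theory Defs
  imports "HOL-Analysis.Analysis" "HOL-Library.Landau_Symbols"
begin

text \<open>Beta(1,b) measure density: Lambda(dx) = b (1-x)^(b-1) dx on [0,1].
  Total rate from state n:
  lambda_n = integral over (0,1) of (1 - n x (1-x)^(n-1) - (1-x)^n) x^(-2) Lambda(dx).\<close>
definition beta_rate :: "real \<Rightarrow> nat \<Rightarrow> real" where
  "beta_rate b n = (LINT x:{0<..<1}|lborel.
      (1 - real n * x * (1 - x) ^ (n - 1) - (1 - x) ^ n) / x\<^sup>2 * (b * (1 - x) powr (b - 1)))"

end

theory Submission
  imports Defs "HOL-Real_Asymp.Real_Asymp"
begin

lemma pow_int:
  fixes e :: real assumes e: "e > -1"
  shows "set_integrable lborel {0<..<1} (\<lambda>x. (1-x) powr e)"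
    and "(LINT x:{0<..<1}|lborel. (1-x) powr e) = 1/(e+1)"
proof -
  have c: "e + 1 > 0" using e by simp
  have I: "set_integrable lborel {0..1} (\<lambda>t. t powr (1 - 1) * (1 - t) powr ((e+1) - 1))"
    using integrable_Beta[of 1 "e+1"] c by simp
  have I2: "set_integrable lborel {0<..<1} (\<lambda>t. t powr (1 - 1) * (1 - t) powr ((e+1) - 1))"
    by (rule set_integrable_subset[OF I]) auto
  have eqf: "\<And>x. x \<in> {0<..<(1::real)} \<Longrightarrow> x powr (1 - 1) * (1 - x) powr ((e+1) - 1) = (1-x) powr e"
    by simp
  show S: "set_integrable lborel {0<..<1} (\<lambda>x. (1-x) powr e)"
    using I2 unfolding set_integrable_def
    by (rule Bochner_Integration.integrable_cong[THEN iffD1, rotated 2]) (auto simp: indicator_def)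
  have B: "Beta 1 (e+1) = 1/(e+1)"
  proof -
    have "Gamma (e+1+1) = (e+1) * Gamma (e+1)"
      by (rule Gamma_plus1) (use c in \<open>auto elim!: nonpos_Ints_cases\<close>)
    moreover have "Gamma (e+1) > 0" using c by (rule Gamma_real_pos)
    ultimately show ?thesis unfolding Beta_def by (simp add: add.commute)
  qed
  have H: "((\<lambda>t. t powr (1 - 1) * (1 - t) powr ((e+1) - 1)) has_integral Beta 1 (e+1)) {0..1}"
    by (rule has_integral_Beta_real) (use c in auto)
  have H2: "((\<lambda>t. (1-t) powr e) has_integral 1/(e+1)) {0<..<1}"
  proof -
    have "((\<lambda>t. t powr (1 - 1) * (1 - t) powr ((e+1) - 1)) has_integral Beta 1 (e+1)) {0<..<1}"
      by (rule has_integral_spike_set_eq[THEN iffD1, OF _ _ H]; rule negligible_subset[of "{0,1}"]) auto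
    then have "((\<lambda>t. (1-t) powr e) has_integral Beta 1 (e+1)) {0<..<1}"
      by (rule has_integral_eq[rotated]) auto
    then show ?thesis using B by simp
  qed
  show "(LINT x:{0<..<1}|lborel. (1-x) powr e) = 1/(e+1)"
    using set_borel_integral_eq_integral(2)[OF S] H2 by (simp add: integral_unique)
qed


lemma poly_id:
  fixes y :: real
  shows "1 - real (Suc m) * (1-y) * y^m - y^(Suc m) = (1-y)^2 * (\<Sum>k=1..m. real k * y^(k-1))"
proof (induction m)
  case 0 then show ?case by simp
next
  case (Suc m)
  have "(\<Sum>k=1..Suc m. real k * y^(k-1)) = (\<Sum>k=1..m. real k * y^(k-1)) + real (Suc m) * y^m"
    by simp
  then show ?case using Suc by (simp add: algebra_simps power2_eq_square)
qed

lemma integrand_eq: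
  fixes b x :: real
  assumes "n \<ge> 1" "0 < x" "x < 1"
  shows "(1 - real n * x * (1 - x) ^ (n - 1) - (1 - x) ^ n) / x\<^sup>2 * (b * (1 - x) powr (b - 1))
       = (\<Sum>k=1..n-1. b * real k * (1-x) powr (real k + b - 2))"
proof -
  obtain m where n: "n = Suc m" using assms(1) by (cases n) auto
  have "1 - real n * x * (1 - x) ^ (n - 1) - (1 - x) ^ n = x^2 * (\<Sum>k=1..m. real k * (1-x)^(k-1))"
    using poly_id[of m "1-x"] by (simp add: n mult.assoc)
  then have "(1 - real n * x * (1 - x) ^ (n - 1) - (1 - x) ^ n) / x\<^sup>2 * (b * (1 - x) powr (b - 1))
      = (\<Sum>k=1..m. real k * (1-x)^(k-1)) * (b * (1 - x) powr (b - 1))"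
    using assms by simp
  also have "\<dots> = (\<Sum>k=1..m. b * real k * ((1-x)^(k-1) * (1 - x) powr (b - 1)))"
    by (simp add: sum_distrib_left sum_distrib_right mult_ac)
  also have "\<dots> = (\<Sum>k=1..m. b * real k * (1-x) powr (real k + b - 2))"
  proof (rule sum.cong)
    fix k assume k: "k \<in> {1..m}"
    have "(1-x)^(k-1) = (1-x) powr (real (k-1))" using assms by (simp add: powr_realpow)
    then have "(1-x)^(k-1) * (1 - x) powr (b - 1) = (1-x) powr (real (k-1) + (b-1))"
      by (simp add: powr_add)
    also have "real (k-1) + (b-1) = real k + b - 2" using k by (simp add: of_nat_diff)
    finally show "b * real k * ((1-x)^(k-1) * (1 - x) powr (b - 1)) = b * real k * (1-x) powr (real k + b - 2)"
      by simp
  qed simp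
  finally show ?thesis by (simp add: n)
qed

lemma beta_rate_sum:
  fixes b :: real
  assumes b: "b > 0" and n: "n \<ge> 1"
  shows "beta_rate b n = b * (\<Sum>k=1..n-1. real k / (b + real k - 1))"
proof -
  have ints: "set_integrable lborel {0<..<1} (\<lambda>x. b * real k * (1-x) powr (real k + b - 2))"
    if "k \<in> {1..n-1}" for k
  proof -
    have "real k + b - 2 > -1" using that b by auto
    then show ?thesis using pow_int(1) by auto
  qed
  have vals: "(LINT x:{0<..<1}|lborel. b * real k * (1-x) powr (real k + b - 2)) = b * (real k / (b + real k - 1))"
    if "k \<in> {1..n-1}" for k
  proof -
    have "real k + b - 2 > -1" using that b by auto
    then have "(LINT x:{0<..<1}|lborel. (1-x) powr (real k + b - 2)) = 1 / (b + real k - 1)"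
      using pow_int(2) by (simp add: algebra_simps)
    then show ?thesis by simp
  qed
  have "beta_rate b n = (LINT x:{0<..<1}|lborel. (\<Sum>k=1..n-1. b * real k * (1-x) powr (real k + b - 2)))"
    unfolding beta_rate_def
    by (rule set_lebesgue_integral_cong) (use n integrand_eq in auto)
  also have "\<dots> = (\<Sum>k=1..n-1. (LINT x:{0<..<1}|lborel. b * real k * (1-x) powr (real k + b - 2)))"
    unfolding set_lebesgue_integral_def scaleR_sum_right
    by (rule Bochner_Integration.integral_sum) (use ints in \<open>auto simp: set_integrable_def\<close>)
  also have "\<dots> = (\<Sum>k=1..n-1. b * (real k / (b + real k - 1)))"
    by (rule sum.cong) (use vals in auto)
  finally show ?thesis by (simp add: sum_distrib_left)
qed


lemma ineq_aux: "(x::real) > 1 \<Longrightarrow> 2/x - 1/(x+1) \<le> 1/(x-1)"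
proof -
  assume x: "x > 1"
  have p: "x*x > 1" using x by (metis less_1_mult)
  have a: "2/x - 1/(x+1) = (x+2)/(x*(x+1))" using x by (simp add: field_simps)
  have "(x+2)*(x-1) \<le> 1 * (x*(x+1))" by (simp add: algebra_simps)
  then have "(x+2)/(x*(x+1)) \<le> 1/(x-1)" using x p by (subst frac_le_eq) (auto simp: field_simps)
  then show ?thesis using a by simp
qed

lemma dig_sum:
  fixes b :: real assumes b: "b > 0"
  shows "Digamma (b + real N) = Digamma b + (\<Sum>k<N. 1/(b + real k))"
proof (induction N)
  case 0 then show ?case by simp
next
  case (Suc N)
  have "Digamma (b + real (Suc N)) = Digamma ((b + real N) + 1)" by (simp add: ac_simps)
  also have "\<dots> = Digamma (b + real N) + 1/(b + real N)"
    by (rule Digamma_plus1) (use b in auto)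
  finally show ?case using Suc by simp
qed

lemma sum_k:
  fixes b :: real assumes b: "b > 0"
  shows "(\<Sum>k=1..m. real k / (b + real k - 1)) = real m - (b-1) * (\<Sum>k<m. 1/(b + real k))"
proof (induction m)
  case 0 then show ?case by simp
next
  case (Suc m)
  have "(\<Sum>k=1..Suc m. real k / (b + real k - 1)) = (\<Sum>k=1..m. real k / (b + real k - 1)) + real (Suc m) / (b + real m)"
    by (simp add: algebra_simps)
  also have "real (Suc m) / (b + real m) = 1 - (b-1) * (1/(b + real m))"
    using b by (simp add: field_simps)
  finally show ?case using Suc by (simp add: algebra_simps)
qed

lemma dig_limit:
  fixes b :: real assumes b: "b > 0"
  shows "(\<lambda>N. Digamma (b + real N) - ln (b + real N)) \<longlonglongrightarrow> 0"
proof -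
  have L: "(\<lambda>m. ln (real m) - (\<Sum>k<m. inverse (b + real k))) \<longlonglongrightarrow> Digamma b"
    using Digamma_LIMSEQ[of b] b by simp
  have "(\<lambda>m. ln (real m) - (\<Sum>k<m. inverse (b + real k))) = (\<lambda>m. ln (real m) - (Digamma (b + real m) - Digamma b))"
    using dig_sum[OF b] by (simp add: divide_inverse)
  with L have "(\<lambda>m. ln (real m) - (Digamma (b + real m) - Digamma b)) \<longlonglongrightarrow> Digamma b" by simp
  then have "(\<lambda>m. Digamma b - (ln (real m) - (Digamma (b + real m) - Digamma b))) \<longlonglongrightarrow> Digamma b - Digamma b"
    by (intro tendsto_intros)
  then have A: "(\<lambda>m. Digamma (b + real m) - ln (real m)) \<longlonglongrightarrow> 0" by simp
  have B: "(\<lambda>m. ln (b + real m) - ln (real m)) \<longlonglongrightarrow> (0::real)" by real_asymp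
  have "(\<lambda>m. (Digamma (b + real m) - ln (real m)) - (ln (b + real m) - ln (real m))) \<longlonglongrightarrow> 0 - 0"
    by (intro tendsto_intros A B)
  then show ?thesis by simp
qed

lemma ln_step_upper:
  fixes x :: real assumes "x > 0"
  shows "ln (x+1) - ln x \<le> 1/x"
proof -
  have "ln ((x+1)/x) \<le> (x+1)/x - 1" by (rule ln_le_minus_one) (use assms in auto)
  then show ?thesis using assms by (simp add: ln_div field_simps)
qed

lemma ln_step_lower:
  fixes x :: real assumes "x > 0"
  shows "1/(x+1) \<le> ln (x+1) - ln x"
proof -
  have "ln (x/(x+1)) \<le> x/(x+1) - 1" by (rule ln_le_minus_one) (use assms in auto)
  then show ?thesis using assms by (simp add: ln_div field_simps)
qed

lemma dig_bounds:
  fixes b :: real assumes b: "b > 0"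
  shows "Digamma (b + real (Suc N)) - ln (b + real (Suc N)) \<le> 0"
    and "- 1/(b + real N) \<le> Digamma (b + real (Suc N)) - ln (b + real (Suc N))"
proof -
  define a where "a = (\<lambda>N. Digamma (b + real N) - ln (b + real N))"
  have step: "a (Suc M) = a M + 1/(b + real M) - (ln (b + real M + 1) - ln (b + real M))" for M
  proof -
    have "Digamma (b + real (Suc M)) = Digamma b + (\<Sum>k<Suc M. 1/(b + real k))" by (rule dig_sum[OF b])
    also have "\<dots> = Digamma (b + real M) + 1/(b + real M)" using dig_sum[OF b, of M] by simp
    finally show ?thesis unfolding a_def by (simp add: algebra_simps)
  qed
  have lim: "a \<longlonglongrightarrow> 0" unfolding a_def by (rule dig_limit[OF b])
  have inc: "incseq a"
  proof (rule incseq_SucI)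
    fix M
    have "ln (b + real M + 1) - ln (b + real M) \<le> 1/(b + real M)" by (rule ln_step_upper) (use b in auto)
    then show "a M \<le> a (Suc M)" using step[of M] by simp
  qed
  show "Digamma (b + real (Suc N)) - ln (b + real (Suc N)) \<le> 0"
    using incseq_le[OF inc lim, of "Suc N"] unfolding a_def .
  define e where "e = (\<lambda>M. a (Suc M) + 1/(b + real M))"
  have lime: "e \<longlonglongrightarrow> 0"
  proof -
    have "(\<lambda>M. a (Suc M)) \<longlonglongrightarrow> 0" using lim by (rule LIMSEQ_Suc)
    moreover have "(\<lambda>M. 1/(b + real M)) \<longlonglongrightarrow> (0::real)" by real_asymp
    ultimately have "(\<lambda>M. a (Suc M) + 1/(b + real M)) \<longlonglongrightarrow> 0 + 0" by (intro tendsto_intros)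
    then show ?thesis unfolding e_def by simp
  qed
  have dec: "decseq e"
  proof (rule decseq_SucI)
    fix M
    define x where "x = b + real M + 1"
    have x: "x > 1" using b unfolding x_def by simp
    have l: "1/(x+1) \<le> ln (x+1) - ln x" by (rule ln_step_lower) (use x in auto)
    have "e (Suc M) = a (Suc M) + 1/x - (ln (x+1) - ln x) + 1/x"
      unfolding e_def step[of "Suc M"] x_def by (simp add: algebra_simps)
    also have "\<dots> \<le> a (Suc M) + 2/x - 1/(x+1)" using l by simp
    also have "\<dots> \<le> a (Suc M) + 1/(x-1)"
      using ineq_aux[OF x] by simp
    also have "1/(x-1) = 1/(b + real M)" unfolding x_def by simp
    finally show "e (Suc M) \<le> e M" unfolding e_def by simp
  qed
  show "- 1/(b + real N) \<le> Digamma (b + real (Suc N)) - ln (b + real (Suc N))"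
    using decseq_ge[OF dec lime, of N] unfolding e_def a_def by simp
qed


lemma r_bigo:
  fixes b :: real assumes b: "b > 0"
  shows "(\<lambda>n. Digamma (real n + b - 1) - ln (real n)) \<in> O(\<lambda>n. 1 / real n)"
proof -
  have f1: "(\<lambda>n. Digamma (real n + b - 1) - ln (real n + b - 1)) \<in> O(\<lambda>n. 1/(b + real n - 2))"
  proof (rule bigoI[where c=1])
    show "\<forall>\<^sub>F n in sequentially. norm (Digamma (real n + b - 1) - ln (real n + b - 1)) \<le> 1 * norm (1/(b + real n - 2))"
      using eventually_ge_at_top[of "2::nat"]
    proof eventually_elim
      case (elim n)
      define N where "N = n - 2"
      have e1: "real n + b - 1 = b + real (Suc N)" and e2: "b + real n - 2 = b + real N"
        using elim unfolding N_def by (auto simp: of_nat_diff)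
      have pos: "b + real N > 0" using b by simp
      show ?case using dig_bounds[OF b, of N] pos unfolding e1 e2 by (auto simp: abs_if)
    qed
  qed
  have f2: "(\<lambda>n. 1/(b + real n - 2)) \<in> O(\<lambda>n. 1 / real n)" by real_asymp
  have f3: "(\<lambda>n. ln (real n + b - 1) - ln (real n)) \<in> O(\<lambda>n. 1 / real n)" by real_asymp
  have "(\<lambda>n. (Digamma (real n + b - 1) - ln (real n + b - 1)) + (ln (real n + b - 1) - ln (real n))) \<in> O(\<lambda>n. 1 / real n)"
    by (rule sum_in_bigo(1)[OF landau_o.big_trans[OF f1 f2] f3])
  then show ?thesis by simp
qed

lemma alg_id:
  fixes b n l P L v s :: real
  assumes "b \<noteq> 0" "n \<noteq> 0" "1 + v \<noteq> 0" "L = b*n*(1+v)"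
    "s = L - (b*n - b*(b-1)*l - b + b*(b-1)*P)"
  shows "1/L - 1/(b*n)*(1 + (b-1)*l/n + (1-(b-1)*P)/n) = 1/(b*n)*(v^2*(1/(1+v)) - s/(b*n))"
proof -
  have h1: "1/L = 1/(b*n) * (1/(1+v))" using assms by simp
  have sv: "s = b * n * v + b * (b - 1) * l + b - b * (b - 1) * P" using assms by (simp add: algebra_simps)
  have h2: "1 + (b-1)*l/n + (1-(b-1)*P)/n = 1 - v + s/(b*n)"
    unfolding sv using assms by (simp add: field_simps)
  have h3: "1/(1+v) - (1 - v + s/(b*n)) = v^2*(1/(1+v)) - s/(b*n)"
    using assms by (simp add: field_simps power2_eq_square)
  have "1/L - 1/(b*n)*(1 + (b-1)*l/n + (1-(b-1)*P)/n) = 1/(b*n) * (1/(1+v) - (1 - v + s/(b*n)))"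
    by (subst h1, subst h2) (simp only: right_diff_distrib)
  then show ?thesis using h3 by simp
qed


theorem lemma6p4:
  fixes b :: real
  assumes "b > 0"
  shows "(\<forall>n::nat. n \<ge> 1 \<longrightarrow>
            beta_rate b n = b * (\<Sum>k=1..n-1. real k / (b + real k - 1)) \<and>
            b * (\<Sum>k=1..n-1. real k / (b + real k - 1))
              = b * (real n - 1) - b * (b - 1) * (Digamma (real n + b - 1) - Digamma b))
       \<and> (\<lambda>n. beta_rate b n - (b * real n - b * (b - 1) * ln (real n) - b + b * (b - 1) * Digamma b))
            \<in> O(\<lambda>n. 1 / real n)
       \<and> (\<lambda>n. 1 / beta_rate b n - 1 / (b * real n) * (1 + (b - 1) * ln (real n) / real n
                 + (1 - (b - 1) * Digamma b) / real n))
            \<in> O(\<lambda>n. 1 / (b * real n) * (ln (real n))\<^sup>2 / (real n)\<^sup>2)"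
proof (intro conjI)
  have b: "b > 0" by fact
  show P1: "\<forall>n::nat. n \<ge> 1 \<longrightarrow>
            beta_rate b n = b * (\<Sum>k=1..n-1. real k / (b + real k - 1)) \<and>
            b * (\<Sum>k=1..n-1. real k / (b + real k - 1))
              = b * (real n - 1) - b * (b - 1) * (Digamma (real n + b - 1) - Digamma b)"
  proof (intro allI impI conjI)
    fix n :: nat assume n: "n \<ge> 1"
    show "beta_rate b n = b * (\<Sum>k=1..n-1. real k / (b + real k - 1))"
      by (rule beta_rate_sum[OF b n])
    obtain m where m: "n = Suc m" using n by (cases n) auto
    have h: "(\<Sum>k=1..n-1. real k / (b + real k - 1)) = real m - (b-1) * (Digamma (b + real m) - Digamma b)"
      using sum_k[OF b, of m] dig_sum[OF b, of m] by (simp add: m)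
    have e: "real n + b - 1 = b + real m" by (simp add: m)
    show "b * (\<Sum>k=1..n-1. real k / (b + real k - 1))
              = b * (real n - 1) - b * (b - 1) * (Digamma (real n + b - 1) - Digamma b)"
      unfolding h e by (simp add: m algebra_simps)
  qed
  define s where "s = (\<lambda>n. beta_rate b n - (b * real n - b * (b - 1) * ln (real n) - b + b * (b - 1) * Digamma b))"
  have s_ev: "\<forall>\<^sub>F n in sequentially. (Digamma (real n + b - 1) - ln (real n)) * (- (b * (b-1))) = s n"
    using eventually_ge_at_top[of "1::nat"]
  proof eventually_elim
    case (elim n)
    with P1 have "beta_rate b n = b * (real n - 1) - b * (b - 1) * (Digamma (real n + b - 1) - Digamma b)"
      by auto
    then show ?case unfolding s_def by (simp add: algebra_simps)
  qed
  have sO: "s \<in> O(\<lambda>n. 1 / real n)"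
  proof -
    have "(\<lambda>n. (Digamma (real n + b - 1) - ln (real n)) * (- (b * (b-1)))) \<in> O(\<lambda>n. 1 / real n)"
      by (rule landau_o.big_1_mult[OF r_bigo[OF b]]) simp
    then show ?thesis using landau_o.big.in_cong[OF s_ev] by blast
  qed
  then show "(\<lambda>n. beta_rate b n - (b * real n - b * (b - 1) * ln (real n) - b + b * (b - 1) * Digamma b))
            \<in> O(\<lambda>n. 1 / real n)" unfolding s_def .

  define v where "v = (\<lambda>n. beta_rate b n / (b * real n) - 1)"
  define nm where "nm = (\<lambda>n. s n / b - (b-1) * ln (real n) - 1 + (b-1) * Digamma b)"
  have v_ev: "\<forall>\<^sub>F n in sequentially. nm n * (1 / real n) = v n"
    using eventually_ge_at_top[of "1::nat"]
  proof eventually_elim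
    case (elim n)
    then have "real n \<noteq> 0" by simp
    then show ?case using b unfolding nm_def v_def s_def by (simp add: field_simps)
  qed
  have nmO: "nm \<in> O(\<lambda>n. ln (real n))"
  proof -
    have a1: "(\<lambda>n. s n / b) \<in> O(\<lambda>n. ln (real n))"
    proof -
      have "(\<lambda>n. 1 / real n) \<in> O(\<lambda>n. ln (real n))" by real_asymp
      then have "s \<in> O(\<lambda>n. ln (real n))" using sO landau_o.big_trans by blast
      then show ?thesis using b by simp
    qed
    have a2: "(\<lambda>n. (b-1) * ln (real n)) \<in> O(\<lambda>n. ln (real n))"
      using landau_o.big_1_mult[OF landau_o.big_refl[of "\<lambda>n. ln (real n)"], of "\<lambda>_. b - 1"]
      by (simp add: mult.commute)
    have a3: "(\<lambda>n. (b-1) * Digamma b - 1) \<in> O(\<lambda>n. ln (real n))"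
    proof -
      have "(\<lambda>n::nat. 1::real) \<in> O(\<lambda>n. ln (real n))" by real_asymp
      then show ?thesis using landau_o.big_trans[OF bigo_const] by blast
    qed
    have "(\<lambda>n. (s n / b - (b-1) * ln (real n)) + ((b-1) * Digamma b - 1)) \<in> O(\<lambda>n. ln (real n))"
      by (intro sum_in_bigo a1 a2 a3)
    then show ?thesis unfolding nm_def by (simp add: algebra_simps)
  qed
  have vO: "v \<in> O(\<lambda>n. ln (real n) * (1 / real n))"
  proof -
    have "(\<lambda>n. nm n * (1 / real n)) \<in> O(\<lambda>n. ln (real n) * (1 / real n))"
      by (rule landau_o.big.mult_right[OF nmO])
    then show ?thesis using landau_o.big.in_cong[OF v_ev] by blast
  qed
  have v0: "v \<longlonglongrightarrow> 0"
  proof -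
    have "(\<lambda>n. ln (real n) * (1 / real n)) \<in> o(\<lambda>n. 1)" by real_asymp
    then have "v \<in> o(\<lambda>n. 1)" using landau_o.big_small_trans[OF vO] by blast
    from smalloD_tendsto[OF this] show ?thesis by simp
  qed
  have v1: "(\<lambda>n. 1 + v n) \<longlonglongrightarrow> 1" using tendsto_add[OF tendsto_const v0, of 1] by simp
  have ev_nz: "\<forall>\<^sub>F n in sequentially. 1 + v n \<noteq> 0"
    using order_tendstoD(1)[OF v1, of 0] by (auto elim: eventually_mono)
  have invO: "(\<lambda>n. 1 / (1 + v n)) \<in> O(\<lambda>_. 1)"
  proof (rule bigoI_tendsto)
    show "((\<lambda>n. 1 / (1 + v n) / 1) \<longlongrightarrow> 1 / 1) sequentially"
      using tendsto_divide[OF tendsto_const v1, of 1] by simp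
  qed simp
  define G where "G = (\<lambda>n::nat. ln (real n) * (1 / real n) * (ln (real n) * (1 / real n)))"
  have t1: "(\<lambda>n. v n ^ 2 * (1 / (1 + v n))) \<in> O(G)"
  proof -
    have "(\<lambda>n. v n * v n) \<in> O(G)" unfolding G_def by (rule landau_o.big.mult[OF vO vO])
    then have "(\<lambda>n. v n * v n * (1 / (1 + v n))) \<in> O(G)" by (rule landau_o.big_1_mult[OF _ invO])
    then show ?thesis by (simp add: power2_eq_square)
  qed
  have t2: "(\<lambda>n. s n / (b * real n)) \<in> O(G)"
  proof -
    have "(\<lambda>n. s n / b) \<in> O(\<lambda>n. 1 / real n)" using sO b by simp
    then have "(\<lambda>n. s n / b * (1 / real n)) \<in> O(\<lambda>n. 1 / real n * (1 / real n))"
      by (rule landau_o.big.mult_right)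
    moreover have "(\<lambda>n. 1 / real n * (1 / real n)) \<in> O(G)" unfolding G_def by real_asymp
    ultimately have "(\<lambda>n. s n / b * (1 / real n)) \<in> O(G)" by (rule landau_o.big_trans)
    then show ?thesis by simp
  qed
  have t3: "(\<lambda>n. 1 / (b * real n) * (v n ^ 2 * (1 / (1 + v n)) - s n / (b * real n)))
            \<in> O(\<lambda>n. 1 / (b * real n) * G n)"
    by (rule landau_o.big.mult_left) (rule sum_in_bigo(2)[OF t1 t2])
  have Geq: "(\<lambda>n. 1 / (b * real n) * G n) = (\<lambda>n. 1 / (b * real n) * (ln (real n))\<^sup>2 / (real n)\<^sup>2)"
    unfolding G_def by (auto simp: power2_eq_square divide_inverse mult_ac)
  have fin_ev: "\<forall>\<^sub>F n in sequentially.
      1 / (b * real n) * (v n ^ 2 * (1 / (1 + v n)) - s n / (b * real n)) =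
      1 / beta_rate b n - 1 / (b * real n) * (1 + (b - 1) * ln (real n) / real n
                 + (1 - (b - 1) * Digamma b) / real n)"
    using eventually_ge_at_top[of "1::nat"] ev_nz
  proof eventually_elim
    case (elim n)
    have nz: "real n \<noteq> 0" using elim by simp
    have L: "beta_rate b n = b * real n * (1 + v n)" unfolding v_def using b nz by simp
    show ?case
      by (rule alg_id[symmetric, where P = "Digamma b"]) (use b nz elim L in \<open>auto simp: s_def\<close>)
  qed
  show "(\<lambda>n. 1 / beta_rate b n - 1 / (b * real n) * (1 + (b - 1) * ln (real n) / real n
                 + (1 - (b - 1) * Digamma b) / real n))
            \<in> O(\<lambda>n. 1 / (b * real n) * (ln (real n))\<^sup>2 / (real n)\<^sup>2)"
    using t3 landau_o.big.in_cong[OF fin_ev] unfolding Geq by blast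
qed

end
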